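(* Let $d\ge1$ and let $X$ be $\mathbb{R}^d$ equipped with a norm $\|\cdot\|$ such that $X$ is uniformly smooth, i.e. its modulus of smoothness $$\rho(u):=\sup_{\|x\|=\|y\|=1}\Big(\tfrac12(\|x+uy\|+\|x-uy\|)-1\Big)$$ satisfies $\lim_{u\to0}\rho(u)/u=0$. Let $B=\{x:\|x\|\le1\}$, $B^o(x)=\{y:\|y-x\|<1\}$, and let $\{e^j\}_{j=1}^d$ be the standard basis of $\mathbb{R}^d$. For $a>0$ define $x^j:=ae^j$, $j=1,\dots,d$, and $x^{d+1}:=-a\sum_{j=1}^de^j$. Then there exists $a>0$ such that $$B\subset\bigcup_{j=1}^{d+1}B^o(x^j).$$ *)

theory Defs
  imports "HOL-Analysis.Analysis"
begin

definition is_norm :: "('a::real_vector \<Rightarrow> real) \<Rightarrow> bool" where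
  "is_norm N \<longleftrightarrow>
     (\<forall>x. 0 \<le> N x) \<and> (\<forall>x. N x = 0 \<longleftrightarrow> x = 0) \<and>
     (\<forall>c x. N (c *\<^sub>R x) = \<bar>c\<bar> * N x) \<and>
     (\<forall>x y. N (x + y) \<le> N x + N y)"

definition modulus_smoothness :: "('a::real_vector \<Rightarrow> real) \<Rightarrow> real \<Rightarrow> real" where
  "modulus_smoothness N u =
     (SUP p\<in>{(x, y). N x = 1 \<and> N y = 1}.
        (N (fst p + u *\<^sub>R snd p) + N (fst p - u *\<^sub>R snd p)) / 2 - 1)"

definition uniformly_smooth :: "('a::real_vector \<Rightarrow> real) \<Rightarrow> bool" where
  "uniformly_smooth N \<longleftrightarrow> ((\<lambda>u. modulus_smoothness N u / u) \<longlongrightarrow> 0) (at 0)"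

end

theory Submission
  imports Defs
begin

context
  fixes N :: "'a::real_vector \<Rightarrow> real"
  assumes nN: "is_norm N"
begin

lemma nn_nonneg: "0 \<le> N x" using nN by (simp add: is_norm_def)
lemma nn_zero: "N x = 0 \<longleftrightarrow> x = 0" using nN by (simp add: is_norm_def)
lemma nn_scale: "N (c *\<^sub>R x) = \<bar>c\<bar> * N x" using nN by (simp add: is_norm_def)
lemma nn_tri: "N (x + y) \<le> N x + N y" using nN by (simp add: is_norm_def)
lemma nn_minus: "N (- x) = N x"
  using nn_scale[of "-1" x] by simp
lemma nn_pos: "x \<noteq> 0 \<Longrightarrow> 0 < N x"
  using nn_nonneg[of x] nn_zero[of x] by linarith
lemma nn_sum: "finite A \<Longrightarrow> N (sum f A) \<le> (\<Sum>i\<in>A. N (f i))"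
proof (induction A rule: finite_induct)
  case empty then show ?case using nn_zero[of 0] by simp
next
  case (insert a A)
  then show ?case using nn_tri[of "f a" "sum f A"] by simp
qed
lemma nn_diff: "N x - N y \<le> N (x - y)"
  using nn_tri[of "x - y" y] by simp
lemma nn_conv:
  assumes "0 \<le> r" "r \<le> 1"
  shows "N (r *\<^sub>R x + (1 - r) *\<^sub>R y) \<le> r * N x + (1 - r) * N y"
  using nn_tri[of "r *\<^sub>R x" "(1 - r) *\<^sub>R y"] nn_scale[of r x] nn_scale[of "1-r" y] assms
  by simp

lemma nn_convex_set: "convex {z. N z < 1}"
  unfolding convex_def
proof (intro allI impI ballI)
  fix x y and u v :: real
  assume x: "x \<in> {z. N z < 1}" and y: "y \<in> {z. N z < 1}" and uv: "0 \<le> u" "0 \<le> v" "u + v = 1"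
  have "N (u *\<^sub>R x + v *\<^sub>R y) \<le> u * N x + v * N y"
    using nn_tri[of "u *\<^sub>R x" "v *\<^sub>R y"] nn_scale[of u x] nn_scale[of v y] uv by simp
  also have "\<dots> < 1"
  proof (cases "u = 0")
    case True then show ?thesis using y uv by simp
  next
    case False
    then have "u * N x < u" using x uv by simp
    moreover have "v * N y \<le> v" using y uv by (simp add: mult_left_le)
    ultimately show ?thesis using uv by linarith
  qed
  finally show "u *\<^sub>R x + v *\<^sub>R y \<in> {z. N z < 1}" by simp
qed

end

lemma support:
  fixes N :: "'a::euclidean_space \<Rightarrow> real"
  assumes nN: "is_norm N" and x1: "N x = 1"
  shows "\<exists>g. g \<bullet> x = 1 \<and> (\<forall>w. g \<bullet> w \<le> N w)"
proof -
  let ?S = "(\<lambda>z. z - x) ` {z. N z < 1}"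
  have "convex ?S" by (rule convex_translation_subtract[OF nn_convex_set[OF nN]])
  moreover have "0 \<notin> ?S" using x1 by auto
  ultimately obtain a where a0: "a \<noteq> 0" and a: "\<forall>y\<in>?S. 0 \<le> a \<bullet> y"
    using separating_hyperplane_set_0 by blast
  define g0 where "g0 = - a"
  have g0: "g0 \<bullet> z \<le> g0 \<bullet> x" if "N z < 1" for z
    using a that by (auto simp: g0_def inner_diff_right)
  have g0nz: "g0 \<noteq> 0" using a0 by (simp add: g0_def)
  define s where "s = 1 / (2 * (N g0 + 1))"
  have Ng0: "0 \<le> N g0" using nn_nonneg[OF nN] .
  have s0: "0 < s" using Ng0 by (simp add: s_def)
  have "N (s *\<^sub>R g0) = s * N g0" using nn_scale[OF nN, of s g0] s0 by simp
  also have "\<dots> < 1" using Ng0 by (simp add: s_def field_simps)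
  finally have "g0 \<bullet> (s *\<^sub>R g0) \<le> g0 \<bullet> x" by (rule g0)
  moreover have "0 < g0 \<bullet> (s *\<^sub>R g0)" using s0 g0nz by simp
  ultimately have px: "0 < g0 \<bullet> x" by linarith
  define g where "g = g0 /\<^sub>R (g0 \<bullet> x)"
  have gx: "g \<bullet> x = 1" using px by (simp add: g_def)
  have gz: "g \<bullet> z \<le> 1" if "N z < 1" for z
    using g0[OF that] px by (simp add: g_def field_simps)
  have "g \<bullet> w \<le> N w" for w
  proof (rule ccontr)
    assume c: "\<not> g \<bullet> w \<le> N w"
    have wnz: "w \<noteq> 0" using c nn_zero[OF nN, of 0] by auto
    have Nw: "0 < N w" using nn_pos[OF nN wnz] .
    have gw: "0 < g \<bullet> w" using c Nw by linarith
    define r where "r = N w / (g \<bullet> w)"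
    have q: "r < 1" using c gw by (simp add: r_def field_simps)
    have q0: "0 < r" using Nw gw by (simp add: r_def)
    define t where "t = (r + 1) / 2"
    have t1a: "t < 1" using q unfolding t_def by (simp add: field_simps)
    have t1b: "0 < t" using q0 unfolding t_def by (simp add: field_simps)
    have t1c: "r < t" using q unfolding t_def by (simp add: field_simps)
    note t1 = t1a t1b t1c
    have "N ((t / N w) *\<^sub>R w) = t"
      using nn_scale[OF nN, of "t / N w" w] t1 Nw by simp
    then have "g \<bullet> ((t / N w) *\<^sub>R w) \<le> 1" using t1 by (intro gz) simp
    moreover have "g \<bullet> ((t / N w) *\<^sub>R w) = t * (g \<bullet> w) / N w" by simp
    moreover have "t * (g \<bullet> w) / N w > 1"
      using t1(3) gw Nw by (simp add: r_def field_simps)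
    ultimately show False by linarith
  qed
  then show ?thesis using gx by blast
qed

lemma rho_ge:
  fixes N :: "'a::real_vector \<Rightarrow> real"
  assumes nN: "is_norm N" and x: "N x = 1" and y: "N y = 1"
  shows "(N (x + u *\<^sub>R y) + N (x - u *\<^sub>R y)) / 2 - 1 \<le> modulus_smoothness N u"
  unfolding modulus_smoothness_def
proof (rule cSUP_upper2)
  show "bdd_above ((\<lambda>p. (N (fst p + u *\<^sub>R snd p) + N (fst p - u *\<^sub>R snd p)) / 2 - 1) ` {(x, y). N x = 1 \<and> N y = 1})"
  proof (rule bdd_aboveI2)
    fix p :: "'a \<times> 'a" assume "p \<in> {(x, y). N x = 1 \<and> N y = 1}"
    then obtain a b where p: "p = (a, b)" "N a = 1" "N b = 1" by auto
    have "N (a + u *\<^sub>R b) \<le> 1 + \<bar>u\<bar>"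
      using nn_tri[OF nN, of a "u *\<^sub>R b"] nn_scale[OF nN, of u b] p by simp
    moreover have "N (a - u *\<^sub>R b) \<le> 1 + \<bar>u\<bar>"
      using nn_tri[OF nN, of a "- (u *\<^sub>R b)"] nn_scale[OF nN, of u b] nn_minus[OF nN, of "u *\<^sub>R b"] p by simp
    ultimately show "(N (fst p + u *\<^sub>R snd p) + N (fst p - u *\<^sub>R snd p)) / 2 - 1 \<le> \<bar>u\<bar>"
      using p by (simp add: field_simps)
  qed
  show "(x, y) \<in> {(x, y). N x = 1 \<and> N y = 1}" using x y by simp
qed simp

lemma upper_bound:
  fixes N :: "'a::euclidean_space \<Rightarrow> real"
  assumes nN: "is_norm N"
  shows "N z \<le> (\<Sum>b\<in>Basis. N b) * norm z"
proof -
  have "N z = N (\<Sum>b\<in>Basis. (z \<bullet> b) *\<^sub>R b)" by (simp add: euclidean_representation)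
  also have "\<dots> \<le> (\<Sum>b\<in>Basis. N ((z \<bullet> b) *\<^sub>R b))" by (rule nn_sum[OF nN]) simp
  also have "\<dots> = (\<Sum>b\<in>Basis. \<bar>z \<bullet> b\<bar> * N b)" by (simp add: nn_scale[OF nN])
  also have "\<dots> \<le> (\<Sum>b\<in>Basis. norm z * N b)"
    by (rule sum_mono) (intro mult_right_mono Basis_le_norm nn_nonneg[OF nN], auto)
  finally show ?thesis by (simp add: sum_distrib_left mult.commute)
qed

lemma lower_bound:
  fixes N :: "'a::euclidean_space \<Rightarrow> real"
  assumes nN: "is_norm N"
  shows "\<exists>c>0. \<forall>z. c * norm z \<le> N z"
proof -
  define C where "C = (\<Sum>b\<in>Basis. N b)"
  have C0: "0 \<le> C" unfolding C_def by (intro sum_nonneg nn_nonneg[OF nN])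
  have ub: "N z \<le> C * norm z" for z unfolding C_def by (rule upper_bound[OF nN])
  have cont: "continuous_on (sphere 0 1) N"
    unfolding continuous_on_iff
  proof (intro ballI allI impI)
    fix x and e :: real assume e: "0 < e"
    show "\<exists>d>0. \<forall>x'\<in>sphere 0 1. dist x' x < d \<longrightarrow> dist (N x') (N x) < e"
    proof (intro exI[of _ "e / (C + 1)"] conjI ballI impI)
      show "0 < e / (C + 1)" using e C0 by simp
      fix x' assume "dist x' x < e / (C + 1)"
      then have d: "norm (x' - x) * (C + 1) < e" using C0 by (simp add: dist_norm field_simps)
      have "\<bar>N x' - N x\<bar> \<le> C * norm (x' - x)"
        using nn_diff[OF nN, of x' x] nn_diff[OF nN, of x x'] ub[of "x' - x"] ub[of "x - x'"]
        by (simp add: norm_minus_commute)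
      also have "\<dots> \<le> norm (x' - x) * (C + 1)" by (simp add: algebra_simps)
      finally show "dist (N x') (N x) < e" using d by (simp add: dist_real_def)
    qed
  qed
  obtain b :: 'a where b: "b \<in> Basis" using nonempty_Basis by blast
  have "sphere (0::'a) 1 \<noteq> {}" using b by (auto intro!: exI[of _ b])
  then obtain x0 where x0: "x0 \<in> sphere 0 1" and m: "\<forall>y\<in>sphere 0 1. N x0 \<le> N y"
    using continuous_attains_inf[OF compact_sphere _ cont] by blast
  have x0nz: "x0 \<noteq> 0" using x0 by auto
  have c0: "0 < N x0" by (rule nn_pos[OF nN x0nz])
  have "N x0 * norm z \<le> N z" for z
  proof (cases "z = 0")
    case True then show ?thesis using nn_zero[OF nN, of 0] by simp
  next
    case False
    have "z /\<^sub>R norm z \<in> sphere 0 1" using False by simp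
    then have "N x0 \<le> N (z /\<^sub>R norm z)" using m by blast
    also have "\<dots> = N z / norm z" using nn_scale[OF nN, of "inverse (norm z)" z] by (simp add: field_simps)
    finally show ?thesis using False by (simp add: field_simps)
  qed
  then show ?thesis using c0 by blast
qed

lemma key:
  fixes N :: "real ^ 'n \<Rightarrow> real" and g x :: "real ^ 'n"
  assumes nN: "is_norm N" and c0: "0 < c" and lb: "\<forall>z. c * norm z \<le> N z"
    and x1: "N x = 1" and gx: "g \<bullet> x = 1"
  shows "(\<exists>j. c / (2 * real CARD('n)^2) \<le> g$j) \<or> c / (2 * real CARD('n)^2) \<le> - (\<Sum>j\<in>UNIV. g$j)"
proof (rule ccontr)
  define d where "d = real CARD('n)"
  define k where "k = c / (2 * d^2)"
  have d1: "1 \<le> d" unfolding d_def by (simp add: Suc_le_eq)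
  have k0: "0 < k" using c0 d1 by (simp add: k_def)
  assume "\<not> ?thesis"
  then have lt: "\<And>j. g$j < k" and lts: "- (\<Sum>j\<in>UNIV. g$j) < k"
    by (auto simp: k_def d_def not_le)
  have hj: "- (d * k) \<le> g$j" for j
  proof -
    have "(\<Sum>i\<in>UNIV. g$i) = g$j + (\<Sum>i\<in>UNIV - {j}. g$i)"
      by (simp add: sum.remove)
    moreover have "(\<Sum>i\<in>UNIV - {j}. g$i) \<le> (\<Sum>i\<in>UNIV - {j}. k)"
      by (rule sum_mono) (use lt in \<open>simp add: less_imp_le\<close>)
    moreover have "(\<Sum>i\<in>UNIV - {j}. k) = (d - 1) * k"
      using d1 by (simp add: d_def card_Diff_singleton of_nat_diff)
    ultimately have "(\<Sum>i\<in>UNIV. g$i) \<le> g$j + (d - 1) * k" by linarith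
    then show ?thesis using lts by (simp add: algebra_simps)
  qed
  have gj: "\<bar>g$j\<bar> \<le> d * k" for j
  proof -
    have "k \<le> d * k" using d1 k0 by simp
    then show ?thesis using hj[of j] lt[of j] by linarith
  qed
  have "c * norm x \<le> 1" using lb x1 by metis
  then have nx: "norm x \<le> 1 / c" using c0 by (simp add: field_simps)
  have xj: "\<bar>x$j\<bar> \<le> 1 / c" for j using component_le_norm_cart[of x j] nx by linarith
  have "1 = (\<Sum>j\<in>UNIV. g$j * x$j)" using gx by (simp add: inner_vec_def)
  also have "\<dots> \<le> (\<Sum>j\<in>UNIV. \<bar>g$j\<bar> * \<bar>x$j\<bar>)"
    by (rule sum_mono) (metis abs_ge_self abs_mult)
  also have "\<dots> \<le> (\<Sum>j\<in>(UNIV::'n set). (d * k) * (1 / c))"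
    by (rule sum_mono) (intro mult_mono gj xj, use d1 k0 in auto)
  also have "\<dots> = d * d * k / c" by (simp add: d_def)
  also have "\<dots> = 1 / 2" using c0 d1 by (simp add: k_def power2_eq_square field_simps)
  finally show False by simp
qed

theorem proposition3p3:
  fixes N :: "real ^ 'n \<Rightarrow> real"
  assumes "is_norm N"
    and "uniformly_smooth N"
  shows "\<exists>a > 0. {x. N x \<le> 1} \<subseteq>
           (\<Union>j\<in>UNIV. {y. N (y - a *\<^sub>R axis j 1) < 1})
           \<union> {y. N (y - (- a *\<^sub>R (\<Sum>j\<in>UNIV. axis j 1))) < 1}"
proof -
  note nN = assms(1)
  obtain c where c0: "0 < c" and lb: "\<forall>z. c * norm z \<le> N z"
    using lower_bound[OF nN] by blast
  define k where "k = c / (2 * real CARD('n)^2)"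
  have k0: "0 < k" using c0 by (simp add: k_def)
  define E :: "real ^ 'n" where "E = (\<Sum>j\<in>UNIV. axis j 1)"
  define U where "U = range (\<lambda>j. axis j (1::real)) \<union> {- E}"
  define K where "K = (\<Sum>j\<in>UNIV. N (axis j 1)) + N E + 1"
  have Ej: "E $ j = 1" for j
    by (simp add: E_def sum_component axis_def)
  have U0: "u \<noteq> 0" if "u \<in> U" for u
  proof -
    obtain j :: 'n where True by simp
    show ?thesis using that Ej[of j] by (auto simp: U_def axis_eq_0_iff)
  qed
  have sN: "0 \<le> (\<Sum>j\<in>UNIV. N (axis j 1))" by (intro sum_nonneg nn_nonneg[OF nN])
  have NE: "0 \<le> N E" by (rule nn_nonneg[OF nN])
  have UK: "N u \<le> K" if "u \<in> U" for u
  proof -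
    { fix j :: 'n
      have "N (axis j 1) \<le> (\<Sum>j\<in>UNIV. N (axis j 1))"
        by (rule member_le_sum) (auto intro: nn_nonneg[OF nN])
      then have "N (axis j 1) \<le> K" using NE by (simp add: K_def) }
    moreover have "N (- E) \<le> K" using sN by (simp add: K_def nn_minus[OF nN])
    ultimately show ?thesis using that by (auto simp: U_def)
  qed
  have K0: "0 < K" using sN NE by (simp add: K_def)
  have lim: "((\<lambda>u. modulus_smoothness N u / u) \<longlongrightarrow> 0) (at 0)"
    using assms(2) by (simp add: uniformly_smooth_def)
  have eps0: "0 < k / (2 * K)" using k0 K0 by simp
  obtain \<delta> where d0: "0 < \<delta>"
    and dd: "\<And>s. s \<noteq> 0 \<Longrightarrow> norm (s - 0) < \<delta> \<Longrightarrow> norm (modulus_smoothness N s / s - 0) < k / (2 * K)"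
    using LIM_D[OF lim eps0] by blast
  define a where "a = min (\<delta> / (2 * K)) (1 / (2 * K))"
  have a0: "0 < a" using d0 K0 by (simp add: a_def)
  have aKd: "a * K < \<delta>"
  proof -
    have "a \<le> \<delta> / (2 * K)" by (simp add: a_def)
    then have "a * K \<le> \<delta> / 2" using K0 by (simp add: field_simps)
    then show ?thesis using d0 by (simp add: field_simps)
  qed
  have aK1: "a * K < 1"
  proof -
    have "a \<le> 1 / (2 * K)" by (simp add: a_def)
    then have "a * K \<le> 1 / 2" using K0 by (simp add: field_simps)
    then show ?thesis by (simp add: field_simps)
  qed
  have unit: "\<exists>u\<in>U. N (x - a *\<^sub>R u) < 1" if x1: "N x = 1" for x
  proof -
    obtain g where gx: "g \<bullet> x = 1" and gN: "\<forall>w. g \<bullet> w \<le> N w"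
      using support[OF nN x1] by blast
    have "\<exists>u\<in>U. k \<le> g \<bullet> u"
      using key[OF nN c0 lb x1 gx]
      by (auto simp: U_def k_def E_def inner_axis inner_sum_right)
    then obtain u where uU: "u \<in> U" and gu: "k \<le> g \<bullet> u" by blast
    have Nu: "0 < N u" using nn_pos[OF nN U0[OF uU]] .
    define s where "s = a * N u"
    have s0: "0 < s" using a0 Nu by (simp add: s_def)
    have sd: "s < \<delta>"
    proof -
      have "s \<le> a * K" using UK[OF uU] a0 by (simp add: s_def)
      then show ?thesis using aKd by linarith
    qed
    define y where "y = (1 / N u) *\<^sub>R u"
    have y1: "N y = 1" using nn_scale[OF nN, of "1 / N u" u] Nu by (simp add: y_def)
    have sy: "s *\<^sub>R y = a *\<^sub>R u" using Nu by (simp add: s_def y_def)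
    have rho: "(N (x + a *\<^sub>R u) + N (x - a *\<^sub>R u)) / 2 - 1 \<le> modulus_smoothness N s"
      using rho_ge[OF nN x1 y1, of s] by (simp add: sy)
    have "norm (modulus_smoothness N s / s - 0) < k / (2 * K)"
      using dd[of s] s0 sd by simp
    then have "modulus_smoothness N s / s < k / (2 * K)" by (metis abs_ge_self le_less_trans real_norm_def diff_zero)
    then have r1: "modulus_smoothness N s < k / (2 * K) * s" using s0 by (simp add: field_simps)
    have "k / (2 * K) * s \<le> k / (2 * K) * (a * K)"
      by (intro mult_left_mono) (use UK[OF uU] a0 eps0 in \<open>simp_all add: s_def\<close>)
    also have "\<dots> = a * k / 2" using K0 by (simp add: field_simps)
    finally have r2: "2 * modulus_smoothness N s < a * k" using r1 by (simp add: field_simps)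
    have "g \<bullet> (x + a *\<^sub>R u) \<le> N (x + a *\<^sub>R u)" using gN by blast
    then have p: "1 + a * k \<le> N (x + a *\<^sub>R u)"
    proof -
      have "a * k \<le> a * (g \<bullet> u)" using gu a0 by (simp add: mult_left_mono)
      then show ?thesis using \<open>g \<bullet> (x + a *\<^sub>R u) \<le> N (x + a *\<^sub>R u)\<close> gx
        by (simp add: inner_add_right)
    qed
    have "N (x + a *\<^sub>R u) + N (x - a *\<^sub>R u) \<le> 2 * modulus_smoothness N s + 2"
      using rho by (simp add: field_simps)
    then have "N (x - a *\<^sub>R u) < 1" using p r2 by linarith
    then show ?thesis using uU by blast
  qed
  have all: "\<exists>u\<in>U. N (x - a *\<^sub>R u) < 1" if x1: "N x \<le> 1" for x
  proof (cases "x = 0")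
    case True
    have "-E \<in> U" by (simp add: U_def)
    moreover have "N (x - a *\<^sub>R (-E)) < 1"
    proof -
      have "N (x - a *\<^sub>R (-E)) = a * N (-E)" using True a0 nn_scale[OF nN, of a "E"] by (simp add: nn_minus[OF nN])
      also have "\<dots> \<le> a * K" using UK[OF \<open>-E \<in> U\<close>] a0 by simp
      finally show ?thesis using aK1 by linarith
    qed
    ultimately show ?thesis by blast
  next
    case False
    define r where "r = N x"
    have r0: "0 < r" using nn_pos[OF nN False] by (simp add: r_def)
    have r1: "r \<le> 1" using x1 by (simp add: r_def)
    define xh where "xh = (1 / r) *\<^sub>R x"
    have xh1: "N xh = 1" using nn_scale[OF nN, of "1 / r" x] r0 by (simp add: xh_def r_def)
    obtain u where uU: "u \<in> U" and hu: "N (xh - a *\<^sub>R u) < 1" using unit[OF xh1] by blast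
    have eq: "x - a *\<^sub>R u = r *\<^sub>R (xh - a *\<^sub>R u) + (1 - r) *\<^sub>R (- (a *\<^sub>R u))"
      using r0 by (simp add: xh_def algebra_simps)
    have "N (x - a *\<^sub>R u) \<le> r * N (xh - a *\<^sub>R u) + (1 - r) * N (- (a *\<^sub>R u))"
      unfolding eq by (rule nn_conv[OF nN]) (use r0 r1 in auto)
    also have "N (- (a *\<^sub>R u)) = a * N u" using a0 by (simp add: nn_minus[OF nN] nn_scale[OF nN])
    finally have le: "N (x - a *\<^sub>R u) \<le> r * N (xh - a *\<^sub>R u) + (1 - r) * (a * N u)" .
    have "r * N (xh - a *\<^sub>R u) < r" using hu r0 by simp
    moreover have "(1 - r) * (a * N u) \<le> (1 - r) * 1"
    proof (rule mult_left_mono)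
      have "a * N u \<le> a * K" using UK[OF uU] a0 by simp
      then show "a * N u \<le> 1" using aK1 by linarith
    qed (use r1 in simp)
    then have "r * N (xh - a *\<^sub>R u) + (1 - r) * (a * N u) < r + (1 - r) * 1"
      using \<open>r * N (xh - a *\<^sub>R u) < r\<close> by (rule add_less_le_mono[rotated])
    with le have "N (x - a *\<^sub>R u) < 1" by simp
    then show ?thesis using uU by blast
  qed
  show ?thesis
  proof (intro exI[of _ a] conjI a0 subsetI)
    fix x assume "x \<in> {x. N x \<le> 1}"
    then obtain u where uU: "u \<in> U" and hu: "N (x - a *\<^sub>R u) < 1" using all by blast
    show "x \<in> (\<Union>j\<in>UNIV. {y. N (y - a *\<^sub>R axis j 1) < 1})
           \<union> {y. N (y - (- a *\<^sub>R (\<Sum>j\<in>UNIV. axis j 1))) < 1}"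
      using uU hu by (auto simp: U_def E_def)
  qed
qed

end
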